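(* Let $P$ be a convex Euclidean polygon all of whose interior angles are obtuse or right, and let $l_0$ be the length of its shortest side. Let $\alpha,\beta$ be two distinct diagonals of $P$ which intersect in their interiors. Then $l(\alpha)\,l(\beta)\ge 2l_0^2$, with equality if and only if $l(\alpha)=l(\beta)=\sqrt2\,l_0$.
   Context: A diagonal of $P$ is a segment joining two non-adjacent vertices of $P$. *)

theory Defs
  imports "HOL-Analysis.Analysis"
begin

text \<open>The Euclidean plane is modelled by the complex numbers. A polygon with n vertices
  is a map v :: nat => complex, vertex i (for i < n) being v i; vertex indices are taken mod n.\<close>

definition cross2 :: "complex \<Rightarrow> complex \<Rightarrow> real" where
  "cross2 a b = Im (cnj a * b)"

definition nxt :: "nat \<Rightarrow> nat \<Rightarrow> nat" where
  "nxt n i = Suc i mod n"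

definition prv :: "nat \<Rightarrow> nat \<Rightarrow> nat" where
  "prv n i = (i + n - 1) mod n"

definition convex_polygon :: "nat \<Rightarrow> (nat \<Rightarrow> complex) \<Rightarrow> bool" where
  "convex_polygon n v \<longleftrightarrow> n \<ge> 3 \<and>
     (\<exists>s::real. (s = 1 \<or> s = -1) \<and>
        (\<forall>i<n. \<forall>j<n. j \<noteq> i \<and> j \<noteq> nxt n i \<longrightarrow>
            s * cross2 (v (nxt n i) - v i) (v j - v i) > 0))"

definition vec_angle :: "complex \<Rightarrow> complex \<Rightarrow> real" where
  "vec_angle a b = arccos ((a \<bullet> b) / (norm a * norm b))"

definition interior_angle :: "nat \<Rightarrow> (nat \<Rightarrow> complex) \<Rightarrow> nat \<Rightarrow> real" where
  "interior_angle n v i = vec_angle (v (prv n i) - v i) (v (nxt n i) - v i)"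

definition shortest_side :: "nat \<Rightarrow> (nat \<Rightarrow> complex) \<Rightarrow> real" where
  "shortest_side n v = Min ((\<lambda>i. dist (v i) (v (nxt n i))) ` {..<n})"

definition is_diagonal :: "nat \<Rightarrow> nat \<Rightarrow> nat \<Rightarrow> bool" where
  "is_diagonal n i j \<longleftrightarrow> i < n \<and> j < n \<and> i \<noteq> j \<and> j \<noteq> nxt n i \<and> i \<noteq> nxt n j"

end

theory Submission
  imports Defs
begin


lemma cross2_eq: "cross2 a b = Re a * Im b - Im a * Re b"
  by (simp add: cross2_def)

lemma inner_cplx: "inner a b = Re a * Re b + Im a * Im b"
  by (simp add: inner_complex_def)

lemma cmod_sq: "(cmod a)\<^sup>2 = (Re a)\<^sup>2 + (Im a)\<^sup>2"
  by (simp add: cmod_def)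

lemma cross2_cnj: "cross2 (cnj a) (cnj b) = - cross2 a b"
  by (simp add: cross2_eq)

lemma inner_cnj: "inner (cnj a) (cnj b) = inner a b"
  by (simp add: inner_cplx)

lemma cross2_diff_left: "cross2 (a - b) c = cross2 a c - cross2 b c"
  by (simp add: cross2_eq algebra_simps)
lemma cross2_diff_right: "cross2 c (a - b) = cross2 c a - cross2 c b"
  by (simp add: cross2_eq algebra_simps)
lemma cross2_add_left: "cross2 (a + b) c = cross2 a c + cross2 b c"
  by (simp add: cross2_eq algebra_simps)
lemma cross2_add_right: "cross2 c (a + b) = cross2 c a + cross2 c b"
  by (simp add: cross2_eq algebra_simps)
lemma cross2_minus_left: "cross2 (- a) c = - cross2 a c"
  by (simp add: cross2_eq)
lemma cross2_minus_right: "cross2 c (- a) = - cross2 c a"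
  by (simp add: cross2_eq)
lemma cross2_self: "cross2 a a = 0"
  by (simp add: cross2_eq)
lemma cross2_anti: "cross2 a b = - cross2 b a"
  by (simp add: cross2_eq)
lemma cross2_scale_left: "cross2 (of_real t * a) c = t * cross2 a c"
  by (simp add: cross2_eq algebra_simps)
lemma cross2_scale_right: "cross2 c (of_real t * a) = t * cross2 c a"
  by (simp add: cross2_eq algebra_simps)

lemma cross2_as_inner: "cross2 u y = inner (\<i> * u) y"
  by (simp add: cross2_eq inner_cplx)

lemma cross2_cyclic: "cross2 (p - q) (r - q) = cross2 (q - r) (p - r)"
  by (simp add: cross2_eq algebra_simps)

lemma plucker: "cross2 e c * cross2 a d = cross2 e a * cross2 c d + cross2 e d * cross2 a c"
  by (simp add: cross2_eq algebra_simps)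

lemma lagrange: "(inner u x)\<^sup>2 + (cross2 u x)\<^sup>2 = (cmod u)\<^sup>2 * (cmod x)\<^sup>2"
  by (simp only: cmod_sq) (simp add: cross2_eq inner_cplx power2_eq_square algebra_simps)

lemma lagrange2: "(cmod u)\<^sup>2 * inner x y = inner u x * inner u y + cross2 u x * cross2 u y"
  by (simp only: cmod_sq) (simp add: cross2_eq inner_cplx power2_eq_square algebra_simps)

lemma lagrange3: "(cmod u)\<^sup>2 * cross2 x y = inner u x * cross2 u y - cross2 u x * inner u y"
  by (simp only: cmod_sq) (simp add: cross2_eq inner_cplx power2_eq_square algebra_simps)

lemma cone_identity: "of_real (cross2 c a) * x = of_real (cross2 c x) * a + of_real (cross2 x a) * c"
  by (simp add: cross2_eq complex_eq_iff algebra_simps)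

lemma abs_cross2_le: "\<bar>cross2 x y\<bar> \<le> cmod x * cmod y"
proof -
  have "(cross2 x y)\<^sup>2 \<le> (cmod x)\<^sup>2 * (cmod y)\<^sup>2"
    using lagrange[of x y] by (smt (verit) zero_le_power2)
  then have "(cross2 x y)\<^sup>2 \<le> (cmod x * cmod y)\<^sup>2" by (simp add: power_mult_distrib)
  then show ?thesis using abs_le_square_iff by (metis abs_mult abs_norm_cancel)
qed

lemma cross2_sum_right: "cross2 u (sum f S) = (\<Sum>k\<in>S. cross2 u (f k))"
  by (simp add: cross2_as_inner inner_sum_right)

lemma inner_sum_right': "inner u (sum f S) = (\<Sum>k\<in>S. inner u (f k))"
  by (simp add: inner_sum_right)



definition cpoly :: "nat \<Rightarrow> (nat \<Rightarrow> complex) \<Rightarrow> real \<Rightarrow> bool" where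
"cpoly n U l \<longleftrightarrow> 3 \<le> n \<and> 0 < l \<and> (\<forall>k. U (k + n) = U k) \<and>
  (\<forall>i j. i < j \<longrightarrow> j < i + n \<longrightarrow> U i \<noteq> U j) \<and>
  (\<forall>i j. U j \<noteq> U i \<longrightarrow> U j \<noteq> U (Suc i) \<longrightarrow> 0 < cross2 (U (Suc i) - U i) (U j - U i)) \<and>
  (\<forall>i. l \<le> cmod (U (Suc i) - U i)) \<and>
  (\<forall>i. inner (U i - U (Suc i)) (U (Suc (Suc i)) - U (Suc i)) \<le> 0)"

lemma cpolyD:
  assumes "cpoly n U l"
  shows "3 \<le> n" "0 < l" "\<And>k. U (k + n) = U k"
    "\<And>i j. i < j \<Longrightarrow> j < i + n \<Longrightarrow> U i \<noteq> U j"
    "\<And>i j. U j \<noteq> U i \<Longrightarrow> U j \<noteq> U (Suc i) \<Longrightarrow> 0 < cross2 (U (Suc i) - U i) (U j - U i)"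
    "\<And>i. l \<le> cmod (U (Suc i) - U i)"
    "\<And>i. inner (U i - U (Suc i)) (U (Suc (Suc i)) - U (Suc i)) \<le> 0"
  using assms unfolding cpoly_def by blast+

lemma cpoly_per: "cpoly n U l \<Longrightarrow> U (k + m * n) = U k"
proof (induction m arbitrary: k)
  case 0 then show ?case by simp
next
  case (Suc m)
  have "U (k + Suc m * n) = U ((k + m * n) + n)" by (simp add: algebra_simps)
  also have "\<dots> = U (k + m * n)" using cpolyD(3)[OF Suc.prems] .
  finally show ?case using Suc by simp
qed

lemma cpoly_mod: "cpoly n U l \<Longrightarrow> U (k mod n) = U k"
  using cpoly_per[of n U l "k mod n" "k div n"] by (simp add: mod_div_mult_eq)

lemma cpoly_eq_iff: assumes "cpoly n U l" shows "U x = U y \<longleftrightarrow> x mod n = y mod n"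
proof
  assume "x mod n = y mod n" then show "U x = U y"
    by (metis cpoly_mod[OF assms(1)])
next
  assume e: "U x = U y"
  have n: "0 < n" using cpolyD(1)[OF assms] by simp
  show "x mod n = y mod n"
  proof (rule ccontr)
    assume ne: "x mod n \<noteq> y mod n"
    have "U (x mod n) = U (y mod n)" using e by (simp add: cpoly_mod[OF assms])
    moreover have "x mod n < n" "y mod n < n" using n by auto
    ultimately show False
    proof (cases "x mod n < y mod n")
      case True then show False using \<open>U (x mod n) = U (y mod n)\<close> \<open>y mod n < n\<close>
        cpolyD(4)[OF assms, of "x mod n" "y mod n"] by auto
    next
      case False then have "y mod n < x mod n" using ne by auto
      then show False using \<open>U (x mod n) = U (y mod n)\<close> \<open>x mod n < n\<close>
        cpolyD(4)[OF assms, of "y mod n" "x mod n"] by auto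
    qed
  qed
qed

lemma cpoly_distinct_lt: assumes "cpoly n U l" "i < n" "j < n" "i \<noteq> j" shows "U i \<noteq> U j"
  using assms cpoly_eq_iff[OF assms(1)] by simp

lemma cpoly_left_turn: assumes "cpoly n U l"
  shows "0 < cross2 (U (Suc i) - U i) (U (Suc (Suc i)) - U (Suc i))"
proof -
  have n: "3 \<le> n" using cpolyD(1)[OF assms] .
  have "U (Suc (Suc i)) \<noteq> U i" using cpolyD(4)[OF assms, of i "Suc (Suc i)"] n by auto
  moreover have "U (Suc (Suc i)) \<noteq> U (Suc i)" using cpolyD(4)[OF assms, of "Suc i" "Suc (Suc i)"] n by auto
  ultimately have "0 < cross2 (U (Suc i) - U i) (U (Suc (Suc i)) - U i)" using cpolyD(5)[OF assms] by blast
  moreover have "cross2 (U (Suc i) - U i) (U (Suc (Suc i)) - U i) = cross2 (U (Suc i) - U i) (U (Suc (Suc i)) - U (Suc i))"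
    by (simp add: cross2_eq algebra_simps)
  ultimately show ?thesis by simp
qed

lemma cpoly_edge_ne: assumes "cpoly n U l" shows "U (Suc i) \<noteq> U i"
  using cpolyD(4)[OF assms, of i "Suc i"] cpolyD(1)[OF assms] by auto

lemma cpoly_edge_sq: assumes "cpoly n U l" shows "l\<^sup>2 \<le> (cmod (U (Suc i) - U i))\<^sup>2"
  using cpolyD(2)[OF assms] cpolyD(6)[OF assms, of i] by (simp add: power_mono)

definition rot :: "nat \<Rightarrow> (nat \<Rightarrow> complex) \<Rightarrow> nat \<Rightarrow> complex" where
  "rot b U k = U (k + b)"

lemma cpoly_rot: assumes "cpoly n U l" shows "cpoly n (rot b U) l"
proof -
  note D = cpolyD[OF assms]
  show ?thesis unfolding cpoly_def rot_def
  proof (intro conjI allI impI)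
    fix k show "U (k + n + b) = U (k + b)" using D(3)[of "k+b"] by (simp add: algebra_simps)
  next
    fix i j :: nat assume "i < j" "j < i + n" then show "U (i + b) \<noteq> U (j + b)" using D(4) by simp
  next
    fix i j assume "U (j + b) \<noteq> U (i + b)" "U (j + b) \<noteq> U (Suc i + b)"
    then show "0 < cross2 (U (Suc i + b) - U (i + b)) (U (j + b) - U (i + b))"
      using D(5)[of "j+b" "i+b"] by simp
  next
    fix i show "l \<le> cmod (U (Suc i + b) - U (i + b))" using D(6)[of "i+b"] by simp
  next
    fix i show "inner (U (i + b) - U (Suc i + b)) (U (Suc (Suc i) + b) - U (Suc i + b)) \<le> 0"
      using D(7)[of "i+b"] by simp
  qed (use D in auto)
qed

definition mirror :: "nat \<Rightarrow> (nat \<Rightarrow> complex) \<Rightarrow> nat \<Rightarrow> complex" where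
  "mirror n U k = cnj (U (n + (n - 1) * k))"

lemma mirror_Suc: assumes "cpoly n U l" shows "mirror n U (Suc k) = cnj (U (n + (n - 1) * k + n - 1))"
proof -
  obtain m where m: "n = Suc m" using cpolyD(1)[OF assms] by (cases n) auto
  have "n + (n - 1) * Suc k = n + (n - 1) * k + n - 1" unfolding m by (simp add: algebra_simps)
  then show ?thesis unfolding mirror_def by simp
qed

lemma mirror_small: assumes "cpoly n U l" "k \<le> n" shows "mirror n U k = cnj (U (n - k))"
proof -
  have "n + (n - 1) * k = (n - k) + k * n" using assms(2) by (simp add: algebra_simps diff_mult_distrib2)
  then show ?thesis unfolding mirror_def using cpoly_per[OF assms(1), of "n - k" k] by simp
qed



lemma cpoly_refl: assumes "cpoly n U l" shows "cpoly n (mirror n U) l"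
proof -
  note D = cpolyD[OF assms]
  define N where "N k = n + (n - 1) * k" for k
  have rN: "mirror n U k = cnj (U (N k))" for k unfolding mirror_def N_def by simp
  have rS: "mirror n U (Suc k) = cnj (U (N k + n - 1))" for k using mirror_Suc[OF assms] unfolding N_def by simp
  have NS: "U (Suc (N k + n - 1)) = U (N k)" for k
  proof -
    have "Suc (N k + n - 1) = N k + n" using D(1) by simp
    then show ?thesis using D(3) by simp
  qed
  show ?thesis unfolding cpoly_def
  proof (intro conjI allI impI)
    show "3 \<le> n" "0 < l" using D by auto
  next
    fix k show "mirror n U (k + n) = mirror n U k"
    proof -
      have "n + (n - 1) * (k + n) = (n + (n - 1) * k) + (n - 1) * n" by (simp add: add_mult_distrib2)
      then show ?thesis unfolding rN N_def using cpoly_per[OF assms, of "n + (n - 1) * k" "n - 1"] by (simp add: add.assoc)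
    qed
  next
    fix i j :: nat assume ij: "i < j" "j < i + n"
    show "mirror n U i \<noteq> mirror n U j"
    proof
      assume "mirror n U i = mirror n U j"
      then have "U (N i) = U (N j)" unfolding rN by simp
      then have m: "N j mod n = N i mod n" using cpoly_eq_iff[OF assms] by metis
      have le: "N i \<le> N j" using ij unfolding N_def by simp
      have "N j - N i = (n - 1) * (j - i)" unfolding N_def using ij by (simp add: diff_mult_distrib2)
      then have d1: "n dvd (n - 1) * (j - i)" using m le by (metis mod_eq_dvd_iff_nat)
      have d2: "n dvd n * (j - i)" by simp
      have "n * (j - i) - (n - 1) * (j - i) = j - i" using D(1) by (simp add: diff_mult_distrib)
      then have "n dvd (j - i)" using dvd_diff_nat[OF d2 d1] by simp
      moreover have "0 < j - i" "j - i < n" using ij by auto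
      ultimately show False using dvd_imp_le by fastforce
    qed
  next
    fix i j assume a1: "mirror n U j \<noteq> mirror n U i" and a2: "mirror n U j \<noteq> mirror n U (Suc i)"
    define p where "p = N i + n - 1"
    have h1: "U (N j) \<noteq> U (Suc p)" using a1 NS unfolding rN p_def by auto
    have h2: "U (N j) \<noteq> U p" using a2 rS[of i] rN[of j] unfolding p_def by auto
    have c: "0 < cross2 (U (Suc p) - U p) (U (N j) - U p)" using D(5)[OF h2 h1] .
    have "cross2 (mirror n U (Suc i) - mirror n U i) (mirror n U j - mirror n U i)
        = cross2 (cnj (U p) - cnj (U (Suc p))) (cnj (U (N j)) - cnj (U (Suc p)))"
      using rS[of i] rN[of i] rN[of j] NS[of i] unfolding p_def by simp
    also have "\<dots> = cross2 (U (Suc p) - U p) (U (N j) - U p)"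
      by (simp add: cross2_eq algebra_simps)
    finally show "0 < cross2 (mirror n U (Suc i) - mirror n U i) (mirror n U j - mirror n U i)" using c by simp
  next
    fix i
    define p where "p = N i + n - 1"
    have "mirror n U (Suc i) - mirror n U i = cnj (U p - U (Suc p))"
      using rS[of i] rN[of i] NS[of i] unfolding p_def by simp
    also have "cnj (U p - U (Suc p)) = cnj (-(U (Suc p) - U p))" by simp
    finally have "cmod (mirror n U (Suc i) - mirror n U i) = cmod (U (Suc p) - U p)"
      by (metis complex_mod_cnj norm_minus_cancel)
    then show "l \<le> cmod (mirror n U (Suc i) - mirror n U i)"
      using D(6)[of p] by simp
  next
    fix i
    define p where "p = N i + n - 1"
    have p2: "2 \<le> p" using D(1) unfolding p_def N_def by simp
    define q where "q = p - 1"
    have pq: "p = Suc q" using p2 unfolding q_def by simp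
    obtain m where m: "n = Suc (Suc (Suc m))" proof -
      have "n = Suc (Suc (Suc (n - 3)))" using D(1) by simp
      then show ?thesis using that by blast
    qed
    have "N (Suc i) + n - 1 = q + n" unfolding q_def p_def N_def m by (simp add: algebra_simps)
    then have r2: "mirror n U (Suc (Suc i)) = cnj (U q)" using rS[of "Suc i"] D(3)[of q] by simp
    have r1: "mirror n U (Suc i) = cnj (U p)" using rS[of i] unfolding p_def by simp
    have r0: "mirror n U i = cnj (U (Suc p))" using rN[of i] NS[of i] unfolding p_def by simp
    have "inner (mirror n U i - mirror n U (Suc i)) (mirror n U (Suc (Suc i)) - mirror n U (Suc i))
         = inner (U q - U (Suc q)) (U (Suc (Suc q)) - U (Suc q))"
      unfolding r0 r1 r2 pq by (simp add: inner_cplx algebra_simps)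
    then show "inner (mirror n U i - mirror n U (Suc i)) (mirror n U (Suc (Suc i)) - mirror n U (Suc i)) \<le> 0"
      using D(7)[of q] by simp
  qed
qed



lemma cone_inner: "cross2 c a * inner w x = cross2 c x * inner w a + cross2 x a * inner w c"
  by (simp add: cross2_eq inner_cplx algebra_simps)

lemma cross_trans:
  assumes "0 < cross2 e a" "0 < cross2 e c" "0 < cross2 e d" "0 < cross2 a c" "0 < cross2 c d"
  shows "0 < cross2 a d"
proof -
  have "0 < cross2 e a * cross2 c d + cross2 e d * cross2 a c" using assms by (intro add_pos_pos mult_pos_pos)
  then have "0 < cross2 e c * cross2 a d" using plucker[of e c a d] by simp
  then show ?thesis using assms(2) by (simp add: zero_less_mult_iff)
qed

lemma cpoly_consec:
  assumes "cpoly n U l" "b < x" "Suc x < b + n"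
  shows "0 < cross2 (U x - U b) (U (Suc x) - U b)"
proof -
  note D = cpolyD[OF assms(1)]
  have "U b \<noteq> U x" using D(4)[of b x] assms by auto
  moreover have "U b \<noteq> U (Suc x)" using D(4)[of b "Suc x"] assms by auto
  ultimately have "0 < cross2 (U (Suc x) - U x) (U b - U x)" using D(5) by blast
  moreover have "cross2 (U (Suc x) - U x) (U b - U x) = cross2 (U x - U b) (U (Suc x) - U b)"
    by (simp add: cross2_eq algebra_simps)
  ultimately show ?thesis by simp
qed

lemma cpoly_first:
  assumes "cpoly n U l" "Suc b < x" "x < b + n"
  shows "0 < cross2 (U (Suc b) - U b) (U x - U b)"
proof -
  note D = cpolyD[OF assms(1)]
  have "U x \<noteq> U b" using D(4)[of b x] assms by auto
  moreover have "U x \<noteq> U (Suc b)" using D(4)[of "Suc b" x] assms by auto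
  ultimately show ?thesis using D(5) by blast
qed

lemma cpoly_AO:
  assumes "cpoly n U l" "b < j" "j < k" "k < b + n"
  shows "0 < cross2 (U j - U b) (U k - U b)"
proof (cases "j = Suc b")
  case True then show ?thesis using cpoly_first[OF assms(1)] assms by auto
next
  case False
  then have jb: "Suc b < j" using assms by auto
  have "\<forall>k. Suc j \<le> k \<longrightarrow> k < b + n \<longrightarrow> 0 < cross2 (U j - U b) (U k - U b)"
  proof
    fix k show "Suc j \<le> k \<longrightarrow> k < b + n \<longrightarrow> 0 < cross2 (U j - U b) (U k - U b)"
    proof (induction k)
      case 0 then show ?case by simp
    next
      case (Suc k)
      show ?case
      proof (intro impI)
        assume a: "Suc j \<le> Suc k" "Suc k < b + n"
        show "0 < cross2 (U j - U b) (U (Suc k) - U b)"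
        proof (cases "Suc j = Suc k")
          case True then show ?thesis using cpoly_consec[OF assms(1), of b j] a jb by auto
        next
          case False
          then have ih: "0 < cross2 (U j - U b) (U k - U b)" using Suc a by auto
          have kk: "j < k" using False a by auto
          show ?thesis
          proof (rule cross_trans[OF _ _ _ ih])
            show "0 < cross2 (U (Suc b) - U b) (U j - U b)" using cpoly_first[OF assms(1) jb] a by auto
            show "0 < cross2 (U (Suc b) - U b) (U k - U b)" using cpoly_first[OF assms(1), of b k] kk jb a by auto
            show "0 < cross2 (U (Suc b) - U b) (U (Suc k) - U b)" using cpoly_first[OF assms(1), of b "Suc k"] kk jb a by auto
            show "0 < cross2 (U k - U b) (U (Suc k) - U b)" using cpoly_consec[OF assms(1), of b k] kk jb a by auto
          qed
        qed
      qed
    qed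
  qed
  then show ?thesis using assms by auto
qed

lemma cpoly_LM:
  assumes "cpoly n U l" "inner w (U (Suc i)) \<le> inner w (U i)"
    "inner w (U (Suc i)) \<le> inner w (U (Suc (Suc i)))"
  shows "inner w (U (Suc i)) \<le> inner w (U k)"
proof -
  note D = cpolyD[OF assms(1)]
  consider "U k = U (Suc i)" | "U k = U i" | "U k = U (Suc (Suc i))"
    | "U k \<noteq> U (Suc i)" "U k \<noteq> U i" "U k \<noteq> U (Suc (Suc i))" by blast
  then show ?thesis
  proof cases
    case 4
    define p where "p = U (Suc i)"
    define a where "a = U i - p"
    define c where "c = U (Suc (Suc i)) - p"
    define x where "x = U k - p"
    have cx: "0 < cross2 c x" using D(5)[of k "Suc i"] 4 unfolding c_def x_def p_def by auto
    have "0 < cross2 (U (Suc i) - U i) (U k - U i)" using D(5)[of k i] 4 by auto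
    then have xa: "0 < cross2 x a" unfolding x_def a_def p_def by (simp add: cross2_eq algebra_simps)
    have "0 < cross2 (U (Suc i) - U i) (U (Suc (Suc i)) - U (Suc i))" using cpoly_left_turn[OF assms(1)] .
    then have ca: "0 < cross2 c a" unfolding c_def a_def p_def by (simp add: cross2_eq algebra_simps)
    have wa: "0 \<le> inner w a" using assms(2) unfolding a_def p_def by (simp add: inner_diff_right)
    have wc: "0 \<le> inner w c" using assms(3) unfolding c_def p_def by (simp add: inner_diff_right)
    have "0 \<le> cross2 c x * inner w a + cross2 x a * inner w c" using cx xa wa wc by simp
    then have "0 \<le> cross2 c a * inner w x" using cone_inner[of c a w x] by simp
    then have "0 \<le> inner w x" using ca by (simp add: zero_le_mult_iff)
    then show ?thesis unfolding x_def p_def by (simp add: inner_diff_right)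
  qed (use assms in auto)
qed



lemma straddle:
  fixes N X Y l cx zx cy zy :: real
  assumes N: "0 < N" and l: "0 < l" "l \<le> X" "l \<le> Y"
    and ex: "cx\<^sup>2 + zx\<^sup>2 = N * X\<^sup>2" and ey: "cy\<^sup>2 + zy\<^sup>2 = N * Y\<^sup>2"
    and c: "cx * cy \<le> 0" and z: "0 \<le> zx" "0 \<le> zy" and d: "0 \<le> cx * cy + zx * zy"
  shows "l * sqrt N \<le> zx + zy \<and> (zx + zy = l * sqrt N \<longrightarrow> (zx = 0 \<and> cy = 0) \<or> (zy = 0 \<and> cx = 0))"
proof -
  have h1: "\<bar>cx * cy\<bar> \<le> zx * zy" using c d by linarith
  have "\<bar>cx * cy\<bar>\<^sup>2 \<le> (zx * zy)\<^sup>2" by (rule power_mono[OF h1 abs_ge_zero])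
  then have h2: "cx\<^sup>2 * cy\<^sup>2 \<le> zx\<^sup>2 * zy\<^sup>2" by (simp add: power_mult_distrib)
  have e1: "cx\<^sup>2 = N * X\<^sup>2 - zx\<^sup>2" "cy\<^sup>2 = N * Y\<^sup>2 - zy\<^sup>2" using ex ey by linarith+
  define A where "A = zx\<^sup>2"
  define B where "B = zy\<^sup>2"
  define P where "P = X\<^sup>2"
  define Q where "Q = Y\<^sup>2"
  have "(N * P - A) * (N * Q - B) \<le> A * B" using h2 e1 unfolding A_def B_def P_def Q_def by simp
  then have "N * (N * P * Q) \<le> N * (P * B + Q * A)" by (simp add: algebra_simps)
  then have h3: "N * P * Q \<le> P * B + Q * A" using N by simp
  have P: "l\<^sup>2 \<le> P" "l\<^sup>2 \<le> Q" unfolding P_def Q_def using l by (simp_all add: power_mono)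
  have A0: "0 \<le> A" "0 \<le> B" unfolding A_def B_def by simp_all
  have PQ: "0 < P * Q" "0 < P" "0 < Q" unfolding P_def Q_def using l by simp_all
  have "P * Q * A \<ge> l\<^sup>2 * Q * A" using mult_right_mono[OF P(1), of "Q * A"] PQ A0 by (simp add: algebra_simps)
  moreover have "P * Q * B \<ge> l\<^sup>2 * P * B" using mult_right_mono[OF P(2), of "P * B"] PQ A0 by (simp add: algebra_simps)
  moreover have "l\<^sup>2 * (P * B + Q * A) \<ge> l\<^sup>2 * (N * P * Q)"
    using mult_left_mono[OF h3, of "l\<^sup>2"] by simp
  ultimately have "P * Q * (A + B) \<ge> P * Q * (l\<^sup>2 * N)" by (simp add: algebra_simps)
  then have h4: "l\<^sup>2 * N \<le> A + B" using PQ by (meson mult_le_cancel_left_pos)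
  have sq: "(l * sqrt N)\<^sup>2 = l\<^sup>2 * N" using N by (simp add: power_mult_distrib)
  have "0 \<le> 2 * zx * zy" using z by simp
  then have h5: "(l * sqrt N)\<^sup>2 \<le> (zx + zy)\<^sup>2" using h4 unfolding sq power2_sum A_def B_def by linarith
  have ge: "l * sqrt N \<le> zx + zy" by (rule power2_le_imp_le[OF h5]) (use z in simp)
  moreover have "zx + zy = l * sqrt N \<longrightarrow> (zx = 0 \<and> cy = 0) \<or> (zy = 0 \<and> cx = 0)"
  proof
    assume e: "zx + zy = l * sqrt N"
    then have "(zx + zy)\<^sup>2 = l\<^sup>2 * N" using sq by simp
    then have "zx * zy \<le> 0" using h4 unfolding power2_sum A_def B_def by linarith
    moreover have "0 \<le> zx * zy" using z by simp
    ultimately have "zx * zy = 0" by linarith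
    then consider "zx = 0" | "zy = 0" by auto
    then show "(zx = 0 \<and> cy = 0) \<or> (zy = 0 \<and> cx = 0)"
    proof cases
      case 1
      then have "A = 0" unfolding A_def by simp
      then have "P * (N * Q) \<le> P * B" using h3 by (simp add: algebra_simps)
      then have "N * Q \<le> B" using PQ by (meson mult_le_cancel_left_pos)
      then have "cy\<^sup>2 \<le> 0" using e1 unfolding Q_def B_def by linarith
      then show ?thesis using 1 by simp
    next
      case 2
      then have "B = 0" unfolding B_def by simp
      then have "Q * (N * P) \<le> Q * A" using h3 by (simp add: algebra_simps)
      then have "N * P \<le> A" using PQ by (meson mult_le_cancel_left_pos)
      then have "cx\<^sup>2 \<le> 0" using e1 unfolding P_def A_def by linarith
      then show ?thesis using 2 by simp
    qed
  qed
  ultimately show ?thesis by blast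
qed

lemma sum_sq_ge:
  assumes "finite S" "\<And>i j. i \<in> S \<Longrightarrow> j \<in> S \<Longrightarrow> 0 \<le> inner (f i) (f j)"
  shows "(\<Sum>i\<in>S. (cmod (f i))\<^sup>2) \<le> (cmod (sum f S))\<^sup>2"
  using assms
proof (induction S rule: finite_induct)
  case empty then show ?case by simp
next
  case (insert x F)
  have "(cmod (sum f (insert x F)))\<^sup>2 = (cmod (f x + sum f F))\<^sup>2" using insert by simp
  also have "\<dots> = (cmod (f x))\<^sup>2 + 2 * inner (f x) (sum f F) + (cmod (sum f F))\<^sup>2"
    by (simp add: power2_norm_eq_inner inner_add_left inner_add_right inner_commute)
  finally have e: "(cmod (sum f (insert x F)))\<^sup>2 = (cmod (f x))\<^sup>2 + 2 * inner (f x) (sum f F) + (cmod (sum f F))\<^sup>2" .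
  have "0 \<le> inner (f x) (sum f F)" unfolding inner_sum_right using insert.prems
    by (intro sum_nonneg) auto
  moreover have "(\<Sum>i\<in>F. (cmod (f i))\<^sup>2) \<le> (cmod (sum f F))\<^sup>2" using insert by auto
  ultimately show ?case using insert e by simp
qed



lemma KL:
  assumes P: "cpoly n U l" and d2: "2 \<le> d" and dn: "d + 3 \<le> n"
    and L: "(cmod (U d - U 0))\<^sup>2 < 2 * l\<^sup>2"
  shows "l * cmod (U 1 - U 0) \<le> cross2 (U 1 - U 0) (U d - U 0) \<and>
    (cross2 (U 1 - U 0) (U d - U 0) = l * cmod (U 1 - U 0) \<longrightarrow>
       d = 3 \<and> cross2 (U 1 - U 0) (U 3 - U 2) = 0 \<and> inner (U 1 - U 0) (U 3 - U 2) < 0)"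
proof -
  note D = cpolyD[OF P]
  define E where "E k = U (Suc k) - U k" for k
  define u where "u = E 0"
  define z where "z k = cross2 u (E k)" for k
  define c where "c k = inner u (E k)" for k
  have u1: "u = U 1 - U 0" unfolding u_def E_def by simp
  have une: "u \<noteq> 0" unfolding u_def E_def using cpoly_edge_ne[OF P, of 0] by simp
  have Nu: "0 < (cmod u)\<^sup>2" using une by simp
  have Elen: "l \<le> cmod (E k)" for k unfolding E_def using D(6) .
  have ang: "0 \<le> inner (E k) (E (Suc k))" for k
  proof -
    have "inner (U k - U (Suc k)) (U (Suc (Suc k)) - U (Suc k)) \<le> 0" using D(7) .
    moreover have "inner (E k) (E (Suc k)) = - inner (U k - U (Suc k)) (U (Suc (Suc k)) - U (Suc k))"
      unfolding E_def by (simp add: inner_cplx algebra_simps)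
    ultimately show ?thesis by linarith
  qed
  have lt: "0 < cross2 (E k) (E (Suc k))" for k unfolding E_def using cpoly_left_turn[OF P] .
  have z0: "z 0 = 0" unfolding z_def u_def by (simp add: cross2_self)
  have c0: "0 < c 0" unfolding c_def u_def using une by (simp add: u_def)
  have En: "E n = u" unfolding u_def E_def using D(3)[of 0] D(3)[of 1] by simp
  have lag: "(c k)\<^sup>2 + (z k)\<^sup>2 = (cmod u)\<^sup>2 * (cmod (E k))\<^sup>2" for k
    unfolding c_def z_def by (rule lagrange)
  have lag2: "(cmod u)\<^sup>2 * inner (E i) (E j) = c i * c j + z i * z j" for i j
    unfolding c_def z_def by (rule lagrange2)
  have lag3: "(cmod u)\<^sup>2 * cross2 (E i) (E j) = c i * z j - z i * c j" for i j
    unfolding c_def z_def by (rule lagrange3)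
  have sumlow: "U d - U 0 = (\<Sum>k<d. E k)" unfolding E_def by (simp add: sum_lessThan_telescope)
  have sumup: "U 0 - U d = (\<Sum>k=d..<n. E k)"
  proof -
    have "(\<Sum>k=d..<n. E k) = U n - U d" unfolding E_def using dn by (simp add: sum_Suc_diff')
    then show ?thesis using D(3)[of 0] by simp
  qed
  have Zlow: "cross2 u (U d - U 0) = (\<Sum>k<d. z k)" unfolding sumlow z_def by (rule cross2_sum_right)
  have Zup: "cross2 u (U d - U 0) = (\<Sum>k=d..<n. - z k)"
  proof -
    have "cross2 u (U 0 - U d) = (\<Sum>k=d..<n. z k)" unfolding sumup z_def by (rule cross2_sum_right)
    moreover have "cross2 u (U d - U 0) = - cross2 u (U 0 - U d)" by (simp add: cross2_eq algebra_simps)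
    ultimately show ?thesis by (simp add: sum_negf)
  qed
  have str: "l * cmod u \<le> s * z i + s * z j \<and>
      (s * z i + s * z j = l * cmod u \<longrightarrow> (z i = 0 \<and> c j = 0) \<or> (z j = 0 \<and> c i = 0))"
    if "c i * c j \<le> 0" "0 \<le> s * z i" "0 \<le> s * z j" "0 \<le> inner (E i) (E j)" "s = 1 \<or> s = -1"
    for i j s
  proof -
    have s2: "(s * z i) * (s * z j) = z i * z j" "(s * z i)\<^sup>2 = (z i)\<^sup>2" "(s * z j)\<^sup>2 = (z j)\<^sup>2"
      using that(5) by auto
    have A: "0 < (cmod u)\<^sup>2" using Nu .
    have "0 \<le> (cmod u)\<^sup>2 * inner (E i) (E j)" using that(4) Nu by simp
    then have d: "0 \<le> c i * c j + (s * z i) * (s * z j)" using lag2[of i j] unfolding s2(1) by simp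
    have ex: "(c i)\<^sup>2 + (s * z i)\<^sup>2 = (cmod u)\<^sup>2 * (cmod (E i))\<^sup>2"
      using lag[of i] unfolding s2(2) .
    have ey: "(c j)\<^sup>2 + (s * z j)\<^sup>2 = (cmod u)\<^sup>2 * (cmod (E j))\<^sup>2"
      using lag[of j] unfolding s2(3) .
    note st = straddle[OF A D(2) Elen[of i] Elen[of j] ex ey that(1) that(2) that(3) d]
    have sq: "sqrt ((cmod u)\<^sup>2) = cmod u" by simp
    have "(s * z i = 0 \<longleftrightarrow> z i = 0)" "(s * z j = 0 \<longleftrightarrow> z j = 0)" using that(5) by auto
    then show ?thesis using st unfolding sq by auto
  qed

  have l2: "l\<^sup>2 \<le> (cmod (E k))\<^sup>2" for k using Elen[of k] D(2) by (simp add: power_mono)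
  have zlt1: "0 < z 1" unfolding z_def u_def using lt[of 0] by simp
  have goalZ: "cross2 (U 1 - U 0) (U d - U 0) = cross2 u (U d - U 0)" "cmod (U 1 - U 0) = cmod u"
    by (simp_all add: u1)
  have partial: "l * cmod u \<le> cross2 u (U d - U 0) \<and>
    (cross2 u (U d - U 0) = l * cmod u \<longrightarrow> d = 3 \<and> z 2 = 0 \<and> c 2 < 0)"
  proof -
    consider (C1) "\<forall>k<d. 0 \<le> z k" | (C2) "\<exists>k<d. z k < 0" by force
    then show ?thesis
    proof cases
      case C1
      show ?thesis
      proof (cases "\<forall>k<d. 0 \<le> c k")
        case True
        have "(\<Sum>k<d. (cmod (E k))\<^sup>2) \<le> (cmod (\<Sum>k<d. E k))\<^sup>2"
        proof (rule sum_sq_ge)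
          fix i j assume ij: "i \<in> {..<d}" "j \<in> {..<d}"
          then have "0 \<le> c i * c j + z i * z j" using True C1 by (simp add: add_nonneg_nonneg mult_nonneg_nonneg)
          then have "0 \<le> (cmod u)\<^sup>2 * inner (E i) (E j)" using lag2[of i j] by simp
          then show "0 \<le> inner (E i) (E j)" using Nu by (simp add: zero_le_mult_iff)
        qed simp
        moreover have "(\<Sum>k<d. l\<^sup>2) \<le> (\<Sum>k<d. (cmod (E k))\<^sup>2)" by (rule sum_mono) (use l2 in auto)
        moreover have "(\<Sum>k<d. l\<^sup>2) = real d * l\<^sup>2" by simp
        moreover have "2 * l\<^sup>2 \<le> real d * l\<^sup>2" using d2 by (intro mult_right_mono) auto
        ultimately have "2 * l\<^sup>2 \<le> (cmod (U d - U 0))\<^sup>2" unfolding sumlow by linarith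
        then show ?thesis using L by linarith
      next
        case False
        then obtain k0 where "k0 < d" "c k0 < 0" by auto
        then obtain k where k: "k < d" "c k < 0" and kmin: "\<forall>m<k. \<not> (m < d \<and> c m < 0)"
          using exists_least_iff[of "\<lambda>k. k < d \<and> c k < 0"] by blast
        have "k \<noteq> 0"
        proof
          assume "k = 0" then show False using k c0 by simp
        qed
        then obtain k' where kk: "k = Suc k'" by (cases k) auto
        have ck': "0 \<le> c k'" using kmin kk k by auto
        have p: "c k' * c k \<le> 0" using ck' k by (simp add: mult_nonneg_nonpos)
        have zk: "0 \<le> 1 * z k'" "0 \<le> 1 * z k" using C1 k kk by auto
        have ak: "0 \<le> inner (E k') (E k)" using ang[of k'] kk by simp
        have S: "l * cmod u \<le> 1 * z k' + 1 * z k \<and>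
            (1 * z k' + 1 * z k = l * cmod u \<longrightarrow> (z k' = 0 \<and> c k = 0) \<or> (z k = 0 \<and> c k' = 0))"
          using str[OF p zk ak] by simp
        define R where "R = {..<d} - {k', k}"
        have fin: "finite {..<d}" by simp
        have sub: "{k', k} \<subseteq> {..<d}" using k kk by auto
        have kne: "k' \<noteq> k" using kk by simp
        have split: "(\<Sum>j<d. z j) = (\<Sum>j\<in>R. z j) + (z k' + z k)"
          unfolding R_def using sum.subset_diff[OF sub fin, of z] kne by simp
        have Rnn: "0 \<le> (\<Sum>j\<in>R. z j)" using C1 by (intro sum_nonneg) (auto simp: R_def)
        have main: "l * cmod u \<le> cross2 u (U d - U 0)" using Zlow split Rnn S by linarith
        moreover have "cross2 u (U d - U 0) = l * cmod u \<longrightarrow> d = 3 \<and> z 2 = 0 \<and> c 2 < 0"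
        proof
          assume eq: "cross2 u (U d - U 0) = l * cmod u"
          have R0: "(\<Sum>j\<in>R. z j) = 0" and pe: "z k' + z k = l * cmod u"
            using eq Zlow split Rnn S by linarith+
          have Rz: "z j = 0" if "j \<in> R" for j
          proof -
            have "finite R" unfolding R_def by simp
            moreover have "\<forall>i\<in>R. 0 \<le> z i" using C1 by (auto simp: R_def)
            ultimately show ?thesis using sum_nonneg_eq_0_iff[of R z] R0 that by auto
          qed
          have "(z k' = 0 \<and> c k = 0) \<or> (z k = 0 \<and> c k' = 0)" using S pe by simp
          then have zk0: "z k = 0" and ck0: "c k' = 0" using k by auto
          have k'0: "k' \<noteq> 0"
          proof
            assume "k' = 0" then show False using ck0 c0 by simp
          qed
          have "1 \<in> {k', k}"
          proof (rule ccontr)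
            assume "1 \<notin> {k', k}"
            then have "1 \<in> R" unfolding R_def using d2 by auto
            then show False using Rz zlt1 by auto
          qed
          then have k'1: "k' = 1" using k'0 kk by auto
          then have k2: "k = 2" using kk by simp
          have d3: "d = 3"
          proof (rule ccontr)
            assume "d \<noteq> 3"
            then have "3 \<in> R" unfolding R_def using k k2 k'1 by auto
            then have "z 3 = 0" using Rz by auto
            then have "(cmod u)\<^sup>2 * cross2 (E 2) (E 3) = 0" using lag3[of 2 3] zk0 k2 by simp
            then have "cross2 (E 2) (E 3) = 0" using Nu by simp
            moreover have "0 < cross2 (E 2) (E 3)" using lt[of 2] by (simp add: numeral_eq_Suc)
            ultimately show False by simp
          qed
          show "d = 3 \<and> z 2 = 0 \<and> c 2 < 0" using d3 zk0 k k2 by simp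
        qed
        ultimately show ?thesis by blast
      qed
    next
      case C2
      then obtain k where k: "k < d" "z k < 0" by auto
      have k1: "k \<noteq> 0"
      proof
        assume "k = 0" then show False using z0 k by simp
      qed
      define phi where "phi x = inner (\<i> * u) x" for x
      have zphi: "z m = phi (U (Suc m)) - phi (U m)" for m
        unfolding z_def E_def phi_def by (simp add: cross2_as_inner inner_diff_right)
      have UNI: "z j \<le> 0" if j: "d \<le> j" "j < n" for j
      proof (rule ccontr)
        assume zj: "\<not> z j \<le> 0"
        define S where "S = {Suc k..j}"
        have Sne: "S \<noteq> {}" "finite S" unfolding S_def using k j by auto
        define mu where "mu = Min ((\<lambda>x. phi (U x)) ` S)"
        have "mu \<in> (\<lambda>x. phi (U x)) ` S" unfolding mu_def using Sne by (intro Min_in) auto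
        then obtain m where m: "m \<in> S" "phi (U m) = mu" by auto
        have mmin: "phi (U m) \<le> phi (U x)" if "x \<in> S" for x
          unfolding m(2) mu_def using Sne that by (intro Min_le) auto
        have mr: "Suc k \<le> m" "m \<le> j" using m(1) unfolding S_def by auto
        obtain m' where mm: "m = Suc m'" using mr by (cases m) auto
        have le1: "phi (U (Suc m')) \<le> phi (U m')"
        proof (cases "m = Suc k")
          case True then show ?thesis using zphi[of k] k mm by simp
        next
          case False then have "m' \<in> S" unfolding S_def using mr mm by auto
          then show ?thesis using mmin mm by simp
        qed
        have le2: "phi (U (Suc m')) \<le> phi (U (Suc (Suc m')))"
        proof (cases "m = j")
          case True then show ?thesis using zphi[of j] zj mm by simp
        next
          case False then have "Suc m \<in> S" unfolding S_def using mr by auto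
          then show ?thesis using mmin mm by simp
        qed
        have "phi (U (Suc m')) \<le> phi (U 0)" using cpoly_LM[OF P, of "\<i> * u" m' 0] le1 le2 unfolding phi_def by blast
        moreover have "0 < cross2 (U (Suc 0) - U 0) (U m - U 0)"
          using cpoly_first[OF P, of 0 m] mr k1 j by simp
        then have "0 < phi (U m) - phi (U 0)" unfolding phi_def u1
          by (simp add: cross2_as_inner inner_diff_right)
        ultimately show False using mm by simp
      qed
      have cn1: "0 \<le> c (n - 1)"
      proof -
        have "Suc (n - 1) = n" using dn by simp
        then have "0 \<le> inner (E (n - 1)) u" using ang[of "n - 1"] En by simp
        then show ?thesis unfolding c_def by (simp add: inner_commute)
      qed
      show ?thesis
      proof (cases "\<forall>j\<in>{d..<n}. 0 \<le> c j")
        case True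
        have "(\<Sum>k\<in>{d..<n}. (cmod (E k))\<^sup>2) \<le> (cmod (\<Sum>k\<in>{d..<n}. E k))\<^sup>2"
        proof (rule sum_sq_ge)
          fix i j assume ij: "i \<in> {d..<n}" "j \<in> {d..<n}"
          then have "0 \<le> c i * c j" "0 \<le> z i * z j" using True UNI by (auto intro: mult_nonneg_nonneg mult_nonpos_nonpos)
          then have "0 \<le> (cmod u)\<^sup>2 * inner (E i) (E j)" using lag2[of i j] by simp
          then show "0 \<le> inner (E i) (E j)" using Nu by (simp add: zero_le_mult_iff)
        qed simp
        moreover have "(\<Sum>k\<in>{d..<n}. l\<^sup>2) \<le> (\<Sum>k\<in>{d..<n}. (cmod (E k))\<^sup>2)" by (rule sum_mono) (use l2 in auto)
        moreover have "(\<Sum>k\<in>{d..<n}. l\<^sup>2) = real (n - d) * l\<^sup>2" by simp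
        moreover have "2 * l\<^sup>2 \<le> real (n - d) * l\<^sup>2" using dn by (intro mult_right_mono) auto
        moreover have "(cmod (U 0 - U d))\<^sup>2 = (cmod (U d - U 0))\<^sup>2" by (simp add: norm_minus_commute)
        ultimately have "2 * l\<^sup>2 \<le> (cmod (U d - U 0))\<^sup>2" unfolding sumup[symmetric] by linarith
        then show ?thesis using L by linarith
      next
        case False
        define J where "J = {j. d \<le> j \<and> j < n \<and> c j < 0}"
        have Jf: "finite J" unfolding J_def by (rule finite_subset[of _ "{..<n}"]) auto
        have Jne: "J \<noteq> {}" using False unfolding J_def by auto
        define j where "j = Max J"
        have jJ: "j \<in> J" unfolding j_def using Jf Jne by (rule Max_in)
        have jmax: "x \<le> j" if "x \<in> J" for x unfolding j_def using Jf that by (rule Max_ge)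
        have j: "d \<le> j" "j < n" "c j < 0" using jJ unfolding J_def by auto
        have jn: "j \<noteq> n - 1" using j cn1 by auto
        then have sj: "Suc j < n" using j by auto
        have csj: "0 \<le> c (Suc j)"
        proof (rule ccontr)
          assume "\<not> 0 \<le> c (Suc j)"
          then have "Suc j \<in> J" unfolding J_def using j sj by auto
          then show False using jmax by fastforce
        qed
        have p: "c j * c (Suc j) \<le> 0" using j csj by (simp add: mult_nonpos_nonneg)
        have zs: "0 \<le> (-1) * z j" "0 \<le> (-1) * z (Suc j)" using UNI j sj by auto
        have S: "l * cmod u \<le> (-1) * z j + (-1) * z (Suc j) \<and>
            ((-1) * z j + (-1) * z (Suc j) = l * cmod u \<longrightarrow> (z j = 0 \<and> c (Suc j) = 0) \<or> (z (Suc j) = 0 \<and> c j = 0))"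
          using str[OF p zs ang[of j]] by simp
        define R where "R = {d..<n} - {j, Suc j}"
        have fin: "finite {d..<n}" by simp
        have sub: "{j, Suc j} \<subseteq> {d..<n}" using j sj by auto
        have split: "(\<Sum>i=d..<n. - z i) = (\<Sum>i\<in>R. - z i) + (- z j + - z (Suc j))"
          unfolding R_def using sum.subset_diff[OF sub fin, of "\<lambda>i. - z i"] by simp
        have Rnn: "0 \<le> (\<Sum>i\<in>R. - z i)" using UNI by (intro sum_nonneg) (auto simp: R_def)
        have main: "l * cmod u \<le> cross2 u (U d - U 0)" using Zup split Rnn S by linarith
        moreover have "cross2 u (U d - U 0) \<noteq> l * cmod u"
        proof
          assume eq: "cross2 u (U d - U 0) = l * cmod u"
          have R0: "(\<Sum>i\<in>R. - z i) = 0" and pe: "- z j + - z (Suc j) = l * cmod u"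
            using eq Zup split Rnn S by linarith+
          have Rz: "z i = 0" if "i \<in> R" for i
          proof -
            have "finite R" unfolding R_def by simp
            moreover have "\<forall>i\<in>R. 0 \<le> - z i" using UNI by (auto simp: R_def)
            ultimately have "- z i = 0" using sum_nonneg_eq_0_iff[of R "\<lambda>i. - z i"] R0 that by auto
            then show ?thesis by simp
          qed
          have "(z j = 0 \<and> c (Suc j) = 0) \<or> (z (Suc j) = 0 \<and> c j = 0)" using S pe by simp
          then have zj0: "z j = 0" using j by auto
          have sjn: "Suc j = n - 1"
          proof (rule ccontr)
            assume a: "Suc j \<noteq> n - 1"
            obtain n' where n': "n = Suc n'" using dn by (cases n) auto
            have nn: "n - 1 = n'" using n' by simp
            have m1: "d \<le> n'" using dn n' by linarith
            have m2: "n' < n" using n' by simp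
            have m3: "n' \<noteq> j" using jn nn by simp
            have m4: "n' \<noteq> Suc j" using a nn by simp
            have "n' \<in> R" unfolding R_def using m1 m2 m3 m4 by simp
            then have zn: "z n' = 0" using Rz by blast
            have "0 < cross2 (E n') (E (Suc n'))" by (rule lt)
            moreover have "E (Suc n') = u" using En n' by simp
            ultimately have "0 < cross2 (E n') u" by simp
            moreover have "cross2 (E n') u = - z n'" unfolding z_def by (simp add: cross2_eq)
            ultimately show False using zn by simp
          qed
          have jd: "j = d"
          proof (rule ccontr)
            assume a: "j \<noteq> d"
            obtain j' where j': "j = Suc j'" using a j by (cases j) auto
            have "j' \<in> R" unfolding R_def using j j' a by auto
            then have "z j' = 0" using Rz by blast
            then have "(cmod u)\<^sup>2 * cross2 (E j') (E j) = 0" using lag3[of j' j] zj0 by simp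
            then have "cross2 (E j') (E j) = 0" using Nu by simp
            moreover have "0 < cross2 (E j') (E (Suc j'))" by (rule lt)
            ultimately show False using j' by simp
          qed
          show False using sjn jd dn by simp
        qed
        ultimately show ?thesis by simp
      qed
    qed
  qed
  show ?thesis
  proof
    show "l * cmod (U 1 - U 0) \<le> cross2 (U 1 - U 0) (U d - U 0)" using partial goalZ by simp
  next
    show "cross2 (U 1 - U 0) (U d - U 0) = l * cmod (U 1 - U 0) \<longrightarrow>
       d = 3 \<and> cross2 (U 1 - U 0) (U 3 - U 2) = 0 \<and> inner (U 1 - U 0) (U 3 - U 2) < 0"
    proof
      assume "cross2 (U 1 - U 0) (U d - U 0) = l * cmod (U 1 - U 0)"
      then have "d = 3 \<and> z 2 = 0 \<and> c 2 < 0" using partial goalZ by simp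
      moreover have "z 2 = cross2 (U 1 - U 0) (U 3 - U 2)" "c 2 = inner (U 1 - U 0) (U 3 - U 2)"
        unfolding z_def c_def E_def u1 by (simp_all add: numeral_eq_Suc)
      ultimately show "d = 3 \<and> cross2 (U 1 - U 0) (U 3 - U 2) = 0 \<and> inner (U 1 - U 0) (U 3 - U 2) < 0" by simp
    qed
  qed
qed



lemma cpoly_two_edges: assumes P: "cpoly n U l" shows "2 * l\<^sup>2 \<le> (cmod (U (Suc (Suc k)) - U k))\<^sup>2"
proof -
  note D = cpolyD[OF P]
  define x where "x = U (Suc k) - U k"
  define y where "y = U (Suc (Suc k)) - U (Suc k)"
  have s: "U (Suc (Suc k)) - U k = x + y" unfolding x_def y_def by simp
  have ixy: "0 \<le> inner x y"
  proof -
    have "inner (U k - U (Suc k)) (U (Suc (Suc k)) - U (Suc k)) \<le> 0" using D(7) .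
    moreover have "inner x y = - inner (U k - U (Suc k)) (U (Suc (Suc k)) - U (Suc k))"
      unfolding x_def y_def by (simp add: inner_cplx algebra_simps)
    ultimately show ?thesis by linarith
  qed
  have "(cmod (x + y))\<^sup>2 = (cmod x)\<^sup>2 + 2 * inner x y + (cmod y)\<^sup>2"
    by (simp add: power2_norm_eq_inner inner_add_left inner_add_right inner_commute)
  moreover have "l\<^sup>2 \<le> (cmod x)\<^sup>2" "l\<^sup>2 \<le> (cmod y)\<^sup>2" unfolding x_def y_def using cpoly_edge_sq[OF P] by auto
  ultimately show ?thesis unfolding s using ixy by linarith
qed

lemma DM:
  assumes P: "cpoly n U l" and ca: "0 < c" "c < d" "d < a" "a < n"
  shows "min (cross2 (U 1 - U 0) (U d - U 0)) (cross2 (U (d - 1) - U 0) (U d - U 0))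
           \<le> cross2 (U c - U 0) (U d - U 0)"
proof (rule ccontr)
  assume "\<not> ?thesis"
  then have c1: "cross2 (U c - U 0) (U d - U 0) < cross2 (U 1 - U 0) (U d - U 0)"
    and c2: "cross2 (U c - U 0) (U d - U 0) < cross2 (U (d - 1) - U 0) (U d - U 0)" by auto
  define w where "w = - (\<i> * (U d - U 0))"
  define phi where "phi x = inner w x" for x
  have H: "cross2 (x - U 0) (U d - U 0) = phi x - phi (U 0)" for x
    unfolding phi_def w_def by (simp add: cross2_eq inner_cplx algebra_simps)
  define S where "S = {1..d - 1}"
  have Sne: "S \<noteq> {}" "finite S" unfolding S_def using ca by auto
  define mu where "mu = Min ((\<lambda>x. phi (U x)) ` S)"
  have "mu \<in> (\<lambda>x. phi (U x)) ` S" unfolding mu_def using Sne by (intro Min_in) auto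
  then obtain m where m: "m \<in> S" "phi (U m) = mu" by auto
  have mmin: "phi (U m) \<le> phi (U x)" if "x \<in> S" for x
    unfolding m(2) mu_def using Sne that by (intro Min_le) auto
  have cS: "c \<in> S" unfolding S_def using ca by auto
  have "phi (U m) \<le> phi (U c)" using mmin cS by blast
  then have m1: "m \<noteq> 1" and m2: "m \<noteq> d - 1" using c1 c2 unfolding H by auto
  have mr: "1 \<le> m" "m \<le> d - 1" using m(1) unfolding S_def by auto
  obtain m' where mm: "m = Suc m'" using mr by (cases m) auto
  have "m' \<in> S" unfolding S_def using mr m1 mm by auto
  then have le1: "phi (U (Suc m')) \<le> phi (U m')" using mmin mm by simp
  have "Suc m \<in> S" unfolding S_def using mr m2 by auto
  then have le2: "phi (U (Suc m')) \<le> phi (U (Suc (Suc m')))" using mmin mm by simp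
  have "phi (U (Suc m')) \<le> phi (U a)" using cpoly_LM[OF P, of w m' a] le1 le2 unfolding phi_def by blast
  then have "cross2 (U m - U 0) (U d - U 0) \<le> cross2 (U a - U 0) (U d - U 0)" unfolding H mm by simp
  moreover have "0 < cross2 (U m - U 0) (U d - U 0)" using cpoly_AO[OF P, of 0 m d] mr ca by simp
  moreover have "0 < cross2 (U d - U 0) (U a - U 0)" using cpoly_AO[OF P, of 0 d a] ca by simp
  moreover have "cross2 (U a - U 0) (U d - U 0) = - cross2 (U d - U 0) (U a - U 0)" by (simp add: cross2_eq)
  ultimately show False by linarith
qed
lemma cmod_cnj_diff: "cmod (cnj a - cnj b) = cmod (a - b)"
  by (metis complex_cnj_diff complex_mod_cnj)

lemma rot_val: "rot b U k = U (k + b)" by (simp add: rot_def)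

lemma mirror_rot_val:
  assumes P: "cpoly n U l" and k: "k \<le> d"
  shows "mirror n (rot d U) k = cnj (U (d - k))"
proof -
  have n1: "1 \<le> n" using cpolyD(1)[OF P] by simp
  have h: "(n - 1) * k + k = n * k" using n1 by (cases n) auto
  have h2: "Suc k * n = n + n * k" by simp
  have h3: "d - k + k = d" using k by simp
  have e: "n + (n - 1) * k + d = (d - k) + Suc k * n" using h h2 h3 by linarith
  show ?thesis unfolding mirror_def rot_def e using cpoly_per[OF P, of "d - k" "Suc k"] by simp
qed

lemma LAD:
  assumes P: "cpoly n U l" and d3: "3 \<le> d" and dn: "d + 3 \<le> n"
    and L: "(cmod (U d - U 0))\<^sup>2 < 2 * l\<^sup>2" and c: "0 < c" "c < d"
  shows "l\<^sup>2 \<le> cross2 (U c - U 0) (U d - U 0) \<and>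
    (cross2 (U c - U 0) (U d - U 0) = l\<^sup>2 \<longrightarrow>
      d = 3 \<and> cross2 (U 1 - U 0) (U 3 - U 2) = 0 \<and> inner (U 1 - U 0) (U 3 - U 2) < 0)"
proof -
  note D = cpolyD[OF P]
  define H where "H x = cross2 (x - U 0) (U d - U 0)" for x
  have dm: "min (H (U 1)) (H (U (d - 1))) \<le> H (U c)"
    unfolding H_def using DM[OF P c(1) c(2), of "d + 1"] dn by simp
  have d2: "2 \<le> d" using d3 by simp
  note K1 = KL[OF P d2 dn L]
  have e1: "l \<le> cmod (U 1 - U 0)" using D(6)[of 0] by simp
  have lA: "l\<^sup>2 \<le> l * cmod (U 1 - U 0)" using e1 D(2) by (simp add: power2_eq_square)
  have A1: "l\<^sup>2 \<le> H (U 1)" using K1 lA unfolding H_def by linarith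
  have A1e: "H (U 1) = l\<^sup>2 \<longrightarrow>
      d = 3 \<and> cross2 (U 1 - U 0) (U 3 - U 2) = 0 \<and> inner (U 1 - U 0) (U 3 - U 2) < 0"
  proof
    assume "H (U 1) = l\<^sup>2"
    then have "cross2 (U 1 - U 0) (U d - U 0) = l * cmod (U 1 - U 0)" using K1 lA unfolding H_def by linarith
    then show "d = 3 \<and> cross2 (U 1 - U 0) (U 3 - U 2) = 0 \<and> inner (U 1 - U 0) (U 3 - U 2) < 0" using K1 by blast
  qed
  define V where "V = mirror n (rot d U)"
  have PV: "cpoly n V l" unfolding V_def by (intro cpoly_refl cpoly_rot P)
  have Vv: "V k = cnj (U (d - k))" if "k \<le> d" for k unfolding V_def using mirror_rot_val[OF P that] .
  have V0: "V 0 = cnj (U d)" using Vv[of 0] by simp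
  have V1: "V 1 = cnj (U (d - 1))" using Vv[of 1] d3 by simp
  have Vd: "V d = cnj (U 0)" using Vv[of d] by simp
  have LV: "(cmod (V d - V 0))\<^sup>2 < 2 * l\<^sup>2"
  proof -
    have "cmod (V d - V 0) = cmod (U 0 - U d)" unfolding Vd V0 by (rule cmod_cnj_diff)
    then have "cmod (V d - V 0) = cmod (U d - U 0)" by (simp add: norm_minus_commute)
    then show ?thesis using L by simp
  qed
  note K2 = KL[OF PV d2 dn LV]
  have e2: "cmod (V 1 - V 0) = cmod (U d - U (d - 1))"
  proof -
    have "cmod (V 1 - V 0) = cmod (U (d - 1) - U d)" unfolding V1 V0 by (rule cmod_cnj_diff)
    then show ?thesis by (simp add: norm_minus_commute)
  qed
  have e2l: "l \<le> cmod (V 1 - V 0)" unfolding e2 using D(6)[of "d - 1"] d3 by simp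
  have lB: "l\<^sup>2 \<le> l * cmod (V 1 - V 0)" using e2l D(2) by (simp add: power2_eq_square)
  have HV: "cross2 (V 1 - V 0) (V d - V 0) = H (U (d - 1))"
    unfolding H_def V1 V0 Vd by (simp add: cross2_eq algebra_simps)
  have A2: "l\<^sup>2 \<le> H (U (d - 1))" using K2 lB HV by linarith
  have A2e: "H (U (d - 1)) = l\<^sup>2 \<longrightarrow>
      d = 3 \<and> cross2 (U 1 - U 0) (U 3 - U 2) = 0 \<and> inner (U 1 - U 0) (U 3 - U 2) < 0"
  proof
    assume "H (U (d - 1)) = l\<^sup>2"
    then have "cross2 (V 1 - V 0) (V d - V 0) = l * cmod (V 1 - V 0)" using K2 lB HV by linarith
    then have st: "d = 3 \<and> cross2 (V 1 - V 0) (V 3 - V 2) = 0 \<and> inner (V 1 - V 0) (V 3 - V 2) < 0" using K2 by blast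
    then have d3': "d = 3" by simp
    have V2: "V 2 = cnj (U 1)" using Vv[of 2] d3' by simp
    have V3: "V 3 = cnj (U 0)" using Vv[of 3] d3' by simp
    have V1': "V 1 = cnj (U 2)" using V1 d3' by simp
    have V0': "V 0 = cnj (U 3)" using V0 d3' by simp
    have "cross2 (V 1 - V 0) (V 3 - V 2) = cross2 (U 1 - U 0) (U 3 - U 2)"
      unfolding V1' V0' V2 V3 by (simp add: cross2_eq algebra_simps)
    moreover have "inner (V 1 - V 0) (V 3 - V 2) = inner (U 1 - U 0) (U 3 - U 2)"
      unfolding V1' V0' V2 V3 by (simp add: inner_cplx algebra_simps)
    ultimately show "d = 3 \<and> cross2 (U 1 - U 0) (U 3 - U 2) = 0 \<and> inner (U 1 - U 0) (U 3 - U 2) < 0"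
      using st by simp
  qed
  have "l\<^sup>2 \<le> H (U c)" using dm A1 A2 by linarith
  moreover have "H (U c) = l\<^sup>2 \<longrightarrow>
      d = 3 \<and> cross2 (U 1 - U 0) (U 3 - U 2) = 0 \<and> inner (U 1 - U 0) (U 3 - U 2) < 0"
  proof
    assume hc: "H (U c) = l\<^sup>2"
    show "d = 3 \<and> cross2 (U 1 - U 0) (U 3 - U 2) = 0 \<and> inner (U 1 - U 0) (U 3 - U 2) < 0"
    proof (cases "H (U 1) \<le> H (U (d - 1))")
      case True
      then have "H (U 1) = l\<^sup>2" using dm hc A1 by (simp add: min_def)
      then show ?thesis using A1e by blast
    next
      case False
      then have "H (U (d - 1)) = l\<^sup>2" using dm hc A2 by (simp add: min_def)
      then show ?thesis using A2e by blast
    qed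
  qed
  ultimately show ?thesis unfolding H_def by blast
qed



lemma mainL:
  assumes P: "cpoly n U l" and i: "0 < c" "c < d" "d < a" "a < n"
    and L: "(cmod (U d - U 0))\<^sup>2 < 2 * l\<^sup>2"
  shows "2 * l\<^sup>2 < cmod (U a - U c) * cmod (U d - U 0)"
proof -
  note D = cpolyD[OF P]
  have d3: "3 \<le> d"
  proof (rule ccontr)
    assume "\<not> 3 \<le> d"
    then have "d = 2" using i by simp
    then show False using cpoly_two_edges[OF P, of 0] L by (simp add: numeral_eq_Suc)
  qed
  have dn: "d + 3 \<le> n"
  proof (rule ccontr)
    assume "\<not> d + 3 \<le> n"
    then have nd: "n = Suc (Suc d)" using i by simp
    have "U (Suc (Suc d)) = U 0" using D(3)[of 0] nd by simp
    then have "2 * l\<^sup>2 \<le> (cmod (U 0 - U d))\<^sup>2" using cpoly_two_edges[OF P, of d] by simp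
    then show False using L by (simp add: norm_minus_commute)
  qed
  note LA = LAD[OF P d3 dn L i(1) i(2)]
  define W where "W = rot d U"
  have PW: "cpoly n W l" unfolding W_def by (rule cpoly_rot[OF P])
  have Wv: "W k = U (k + d)" for k unfolding W_def rot_def by simp
  have Wd': "W (n - d) = U 0" using Wv[of "n - d"] D(3)[of 0] dn by simp
  have W0: "W 0 = U d" using Wv[of 0] by simp
  have Wa: "W (a - d) = U a" using Wv[of "a - d"] i by simp
  have d3': "3 \<le> n - d" using dn by simp
  have dn': "n - d + 3 \<le> n" using d3 dn by simp
  have LW: "(cmod (W (n - d) - W 0))\<^sup>2 < 2 * l\<^sup>2" unfolding Wd' W0 using L by (simp add: norm_minus_commute)
  have c': "0 < a - d" "a - d < n - d" using i by auto
  note LB = LAD[OF PW d3' dn' LW c'(1) c'(2)]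
  define Hl where "Hl = cross2 (U c - U 0) (U d - U 0)"
  define Hu where "Hu = cross2 (U a - U d) (U 0 - U d)"
  have Hl: "l\<^sup>2 \<le> Hl" using LA unfolding Hl_def by blast
  have Hu: "l\<^sup>2 \<le> Hu" using LB unfolding Hu_def Wa Wd' W0 by blast
  have key: "cross2 (U c - U a) (U d - U 0) = Hl + Hu" unfolding Hl_def Hu_def by (simp add: cross2_eq algebra_simps)
  have notboth: "\<not> (Hl = l\<^sup>2 \<and> Hu = l\<^sup>2)"
  proof
    assume h: "Hl = l\<^sup>2 \<and> Hu = l\<^sup>2"
    have s1: "d = 3 \<and> cross2 (U 1 - U 0) (U 3 - U 2) = 0 \<and> inner (U 1 - U 0) (U 3 - U 2) < 0"
      using LA h unfolding Hl_def by blast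
    have s2: "n - d = 3 \<and> cross2 (W 1 - W 0) (W 3 - W 2) = 0 \<and> inner (W 1 - W 0) (W 3 - W 2) < 0"
      using LB h unfolding Hu_def Wa Wd' W0 by blast
    have d3e: "d = 3" and n6: "n = 6" using s1 s2 by auto
    define E0 where "E0 = U 1 - U 0"
    define E2 where "E2 = U 3 - U 2"
    define E3 where "E3 = U 4 - U 3"
    define E5 where "E5 = U 6 - U 5"
    have a1: "cross2 E0 E2 = 0" "inner E0 E2 < 0" using s1 unfolding E0_def E2_def by auto
    have a2: "cross2 E3 E5 = 0" "inner E3 E5 < 0" using s2 d3e unfolding E3_def E5_def Wv by (auto simp: numeral_eq_Suc)
    have lt2: "0 < cross2 E2 E3" using cpoly_left_turn[OF P, of 2] unfolding E2_def E3_def by (simp add: numeral_eq_Suc)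
    have U6: "U 6 = U 0" "U 7 = U 1" using D(3)[of 0] D(3)[of 1] n6 by simp_all
    have lt5: "0 < cross2 E5 E0" using cpoly_left_turn[OF P, of 5] U6 unfolding E5_def E0_def by (simp add: numeral_eq_Suc)
    have n0: "0 < (cmod E0)\<^sup>2" "0 < (cmod E3)\<^sup>2" unfolding E0_def E3_def
      using cpoly_edge_ne[OF P, of 0] cpoly_edge_ne[OF P, of 3] by (simp_all add: numeral_eq_Suc)
    have "(cmod E0)\<^sup>2 * cross2 E2 E3 = inner E0 E2 * cross2 E0 E3" using lagrange3[of E0 E2 E3] a1 by simp
    moreover have "0 < (cmod E0)\<^sup>2 * cross2 E2 E3" using n0(1) lt2 by (rule mult_pos_pos)
    ultimately have "0 < inner E0 E2 * cross2 E0 E3" by simp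
    then have q1: "cross2 E0 E3 < 0" using a1 by (simp add: zero_less_mult_iff)
    have "(cmod E3)\<^sup>2 * cross2 E5 E0 = inner E3 E5 * cross2 E3 E0" using lagrange3[of E3 E5 E0] a2 by simp
    moreover have "0 < (cmod E3)\<^sup>2 * cross2 E5 E0" using n0(2) lt5 by (rule mult_pos_pos)
    ultimately have "0 < inner E3 E5 * cross2 E3 E0" by simp
    then have q2: "cross2 E3 E0 < 0" using a2 by (simp add: zero_less_mult_iff)
    have "cross2 E3 E0 = - cross2 E0 E3" by (simp add: cross2_eq)
    then show False using q1 q2 by simp
  qed
  have "2 * l\<^sup>2 < Hl + Hu" using Hl Hu notboth by fastforce
  moreover have "\<bar>cross2 (U c - U a) (U d - U 0)\<bar> \<le> cmod (U c - U a) * cmod (U d - U 0)" by (rule abs_cross2_le)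
  moreover have "cmod (U c - U a) = cmod (U a - U c)" by (simp add: norm_minus_commute)
  ultimately show ?thesis using key by simp
qed



lemma rotMain:
  assumes P: "cpoly n U l" and ij: "i < k" "k < j" "j < n" "m < n" "m < i \<or> j < m"
    and L: "(cmod (U j - U i))\<^sup>2 < 2 * l\<^sup>2"
  shows "2 * l\<^sup>2 < cmod (U m - U k) * cmod (U j - U i)"
proof -
  note D = cpolyD[OF P]
  define W where "W = rot i U"
  have PW: "cpoly n W l" unfolding W_def by (rule cpoly_rot[OF P])
  have Wv: "W x = U (x + i)" for x unfolding W_def rot_def by simp
  define a where "a = (if j < m then m - i else m + n - i)"
  have Wd: "W (j - i) = U j" using Wv[of "j - i"] ij by simp
  have W0: "W 0 = U i" using Wv[of 0] by simp
  have Wc: "W (k - i) = U k" using Wv[of "k - i"] ij by simp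
  have Wa: "W a = U m"
  proof (cases "j < m")
    case True then show ?thesis unfolding a_def using Wv[of "m - i"] ij by simp
  next
    case False
    then have "m < i" using ij by auto
    moreover have "i \<le> m + n" using ij by simp
    ultimately have "a + i = m + n" unfolding a_def using False by simp
    then show ?thesis using Wv[of a] D(3)[of m] by simp
  qed
  have r: "0 < k - i" "k - i < j - i" "j - i < a" "a < n" unfolding a_def using ij by auto
  have LW: "(cmod (W (j - i) - W 0))\<^sup>2 < 2 * l\<^sup>2" unfolding Wd W0 using L .
  show ?thesis using mainL[OF PW r LW] unfolding Wd W0 Wc Wa .
qed

lemma f_affine: "cross2 D ((1 - u) *\<^sub>R a + u *\<^sub>R b - q) = (1 - u) * cross2 D (a - q) + u * cross2 D (b - q)"
  by (simp add: cross2_eq algebra_simps)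

lemma CR0:
  assumes P: "cpoly n U l" and idx: "i < j" "j < n" "k < n" "m < n"
    and seg: "open_segment (U i) (U j) \<inter> open_segment (U k) (U m) \<noteq> {}"
    and cs: "closed_segment (U i) (U j) \<noteq> closed_segment (U k) (U m)"
    and L: "(cmod (U j - U i))\<^sup>2 < 2 * l\<^sup>2"
  shows "2 * l\<^sup>2 < cmod (U j - U i) * cmod (U m - U k)"
proof -
  note D = cpolyD[OF P]
  obtain p where p1: "p \<in> open_segment (U i) (U j)" and p2: "p \<in> open_segment (U k) (U m)" using seg by blast
  define f where "f x = cross2 (U j - U i) (x - U i)" for x
  have fi: "f (U i) = 0" and fj: "f (U j) = 0" unfolding f_def by (simp_all add: cross2_eq)
  have fp: "f p = 0"
  proof -
    obtain u where pu: "p = (1 - u) *\<^sub>R U i + u *\<^sub>R U j" using p1 unfolding in_segment by blast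
    have "f p = (1 - u) * f (U i) + u * f (U j)" unfolding f_def pu by (rule f_affine)
    then show ?thesis using fi fj by simp
  qed
  obtain s where s: "0 < s" "s < 1" "p = (1 - s) *\<^sub>R U k + s *\<^sub>R U m" and kmne: "U k \<noteq> U m"
    using p2 unfolding in_segment by blast
  have "f p = (1 - s) * f (U k) + s * f (U m)" unfolding f_def s(3) by (rule f_affine)
  then have comb: "(1 - s) * f (U k) + s * f (U m) = 0" using fp by simp
  have sides: "(i < x \<and> x < j \<longrightarrow> f (U x) < 0) \<and> (\<not> (i < x \<and> x < j) \<longrightarrow> 0 < f (U x))"
    if x: "x < n" "x \<noteq> i" "x \<noteq> j" for x
  proof (intro conjI impI)
    assume "i < x \<and> x < j"
    then have "0 < cross2 (U x - U i) (U j - U i)" using cpoly_AO[OF P, of i x j] idx by auto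
    then show "f (U x) < 0" unfolding f_def by (simp add: cross2_eq algebra_simps)
  next
    assume nb: "\<not> (i < x \<and> x < j)"
    show "0 < f (U x)"
    proof (cases "j < x")
      case True
      then show ?thesis unfolding f_def using cpoly_AO[OF P, of i j x] idx x by auto
    next
      case False
      then have "x < i" using nb x by auto
      then have "0 < cross2 (U j - U i) (U (x + n) - U i)" using cpoly_AO[OF P, of i j "x + n"] idx by auto
      then show ?thesis unfolding f_def using D(3)[of x] by simp
    qed
  qed
  have fz: "x = i \<or> x = j" if "x < n" "f (U x) = 0" for x
    using sides[of x] that by fastforce
  have kmne': "k \<noteq> m" using kmne by auto
  have nz: "f (U k) \<noteq> 0 \<and> f (U m) \<noteq> 0"
  proof (rule ccontr)
    assume "\<not> (f (U k) \<noteq> 0 \<and> f (U m) \<noteq> 0)"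
    then have "f (U k) = 0 \<and> f (U m) = 0" using comb s by (auto simp: algebra_simps)
    then have "(k = i \<or> k = j) \<and> (m = i \<or> m = j)" using fz idx by blast
    then have "(k = i \<and> m = j) \<or> (k = j \<and> m = i)" using kmne' by auto
    then show False using cs closed_segment_commute by metis
  qed
  have kij: "k \<noteq> i" "k \<noteq> j" "m \<noteq> i" "m \<noteq> j" using nz fi fj by auto
  have opp: "f (U k) * f (U m) < 0"
  proof (rule ccontr)
    assume "\<not> f (U k) * f (U m) < 0"
    then have "0 \<le> f (U k) * f (U m)" by simp
    then have "(0 < f (U k) \<and> 0 < f (U m)) \<or> (f (U k) < 0 \<and> f (U m) < 0)" using nz
      by (auto simp: zero_le_mult_iff)
    moreover have "0 < (1 - s) * f (U k) + s * f (U m)" if "0 < f (U k)" "0 < f (U m)"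
      using that s by (intro add_pos_pos mult_pos_pos) auto
    moreover have "(1 - s) * f (U k) + s * f (U m) < 0" if "f (U k) < 0" "f (U m) < 0"
    proof -
      have "(1 - s) * f (U k) < 0" using that s by (simp add: mult_pos_neg)
      moreover have "s * f (U m) < 0" using that s by (simp add: mult_pos_neg)
      ultimately show ?thesis by simp
    qed
    ultimately show False using comb by auto
  qed
  show ?thesis
  proof (cases "f (U k) < 0")
    case True
    then have "0 < f (U m)" using opp by (auto simp: mult_less_0_iff)
    then have k1: "i < k \<and> k < j" and m1: "m < i \<or> j < m"
      using sides[of k] sides[of m] True kij idx by auto
    have "2 * l\<^sup>2 < cmod (U m - U k) * cmod (U j - U i)" using rotMain[OF P, of i k j m] k1 m1 idx L by auto
    then show ?thesis by (simp add: mult.commute)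
  next
    case False
    then have "0 < f (U k)" using nz by auto
    then have "f (U m) < 0" using opp by (auto simp: mult_less_0_iff)
    then have m1: "i < m \<and> m < j" and k1: "k < i \<or> j < k"
      using sides[of k] sides[of m] \<open>0 < f (U k)\<close> kij idx by auto
    have "2 * l\<^sup>2 < cmod (U k - U m) * cmod (U j - U i)" using rotMain[OF P, of i m j k] k1 m1 idx L by auto
    then show ?thesis by (simp add: mult.commute norm_minus_commute)
  qed
qed



lemma CR:
  assumes P: "cpoly n U l" and idx: "i < n" "j < n" "k < n" "m < n"
    and seg: "open_segment (U i) (U j) \<inter> open_segment (U k) (U m) \<noteq> {}"
    and cs: "closed_segment (U i) (U j) \<noteq> closed_segment (U k) (U m)"
    and L: "(cmod (U i - U j))\<^sup>2 < 2 * l\<^sup>2"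
  shows "2 * l\<^sup>2 < cmod (U i - U j) * cmod (U k - U m)"
proof -
  have "i \<noteq> j" using seg by auto
  then consider "i < j" | "j < i" by linarith
  then show ?thesis
  proof cases
    case 1
    have L': "(cmod (U j - U i))\<^sup>2 < 2 * l\<^sup>2" using L by (simp add: norm_minus_commute)
    show ?thesis using CR0[OF P 1 idx(2) idx(3) idx(4) seg cs L'] by (simp add: norm_minus_commute)
  next
    case 2
    have seg': "open_segment (U j) (U i) \<inter> open_segment (U k) (U m) \<noteq> {}" using seg by (simp add: open_segment_commute)
    have cs': "closed_segment (U j) (U i) \<noteq> closed_segment (U k) (U m)" using cs by (simp add: closed_segment_commute)
    show ?thesis using CR0[OF P 2 idx(1) idx(3) idx(4) seg' cs' L] by (simp add: norm_minus_commute)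
  qed
qed

lemma IM:
  assumes P: "cpoly n U l" and idx: "i < n" "j < n" "k < n" "m < n"
    and seg: "open_segment (U i) (U j) \<inter> open_segment (U k) (U m) \<noteq> {}"
    and cs: "closed_segment (U i) (U j) \<noteq> closed_segment (U k) (U m)"
  shows "2 * l\<^sup>2 \<le> cmod (U i - U j) * cmod (U k - U m) \<and>
    (cmod (U i - U j) * cmod (U k - U m) = 2 * l\<^sup>2 \<longleftrightarrow>
      cmod (U i - U j) = sqrt 2 * l \<and> cmod (U k - U m) = sqrt 2 * l)"
proof -
  define p where "p = cmod (U i - U j)"
  define q where "q = cmod (U k - U m)"
  define t where "t = sqrt 2 * l"
  have l0: "0 < l" using cpolyD(2)[OF P] .
  have t0: "0 < t" unfolding t_def using l0 by simp
  have tt: "t * t = 2 * l\<^sup>2" unfolding t_def by (simp add: power2_eq_square algebra_simps)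
  have p0: "0 \<le> p" "0 \<le> q" unfolding p_def q_def by simp_all
  have seg': "open_segment (U k) (U m) \<inter> open_segment (U i) (U j) \<noteq> {}" using seg by blast
  have cs': "closed_segment (U k) (U m) \<noteq> closed_segment (U i) (U j)" using cs by simp
  have A: "2 * l\<^sup>2 < p * q" if "p < t"
  proof -
    have "p * p < t * t" using that p0 by (simp add: mult_strict_mono)
    then have "(cmod (U i - U j))\<^sup>2 < 2 * l\<^sup>2" using tt unfolding p_def by (simp add: power2_eq_square)
    then show ?thesis using CR[OF P idx seg cs] unfolding p_def q_def by simp
  qed
  have B: "2 * l\<^sup>2 < p * q" if "q < t"
  proof -
    have "q * q < t * t" using that p0 by (simp add: mult_strict_mono)
    then have "(cmod (U k - U m))\<^sup>2 < 2 * l\<^sup>2" using tt unfolding q_def by (simp add: power2_eq_square)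
    then show ?thesis using CR[OF P idx(3) idx(4) idx(1) idx(2) seg' cs'] unfolding p_def q_def by (simp add: mult.commute)
  qed
  have "2 * l\<^sup>2 \<le> p * q \<and> (p * q = 2 * l\<^sup>2 \<longleftrightarrow> p = t \<and> q = t)"
  proof (cases "p < t \<or> q < t")
    case True
    then have "2 * l\<^sup>2 < p * q" using A B by blast
    then show ?thesis using True by auto
  next
    case False
    then have pt: "t \<le> p" "t \<le> q" by auto
    have "t * t \<le> p * q" using pt t0 by (intro mult_mono) auto
    moreover have "p * q = t * t \<longrightarrow> p = t \<and> q = t"
    proof
      assume e: "p * q = t * t"
      show "p = t \<and> q = t"
      proof (rule ccontr)
        assume "\<not> (p = t \<and> q = t)"
        then have "t < p \<or> t < q" using pt by auto
        then have "t * t < p * q"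
        proof
          assume "t < p" then show ?thesis using pt t0 by (intro mult_less_le_imp_less) auto
        next
          assume "t < q" then show ?thesis using pt t0 by (intro mult_le_less_imp_less) auto
        qed
        then show False using e by simp
      qed
    qed
    ultimately show ?thesis using tt by auto
  qed
  then show ?thesis unfolding p_def q_def t_def by simp
qed



lemma angle_imp_inner:
  assumes a: "a \<noteq> 0" and b: "b \<noteq> 0" and ang: "pi / 2 \<le> vec_angle a b"
  shows "inner a b \<le> 0"
proof (rule ccontr)
  assume "\<not> inner a b \<le> 0"
  then have pos: "0 < inner a b" by simp
  define x where "x = inner a b / (cmod a * cmod b)"
  have ab: "0 < cmod a * cmod b" using a b by simp
  have x0: "0 < x" unfolding x_def using pos ab by simp
  have "\<bar>inner a b\<bar> \<le> cmod a * cmod b" by (rule Cauchy_Schwarz_ineq2)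
  then have x1: "x \<le> 1" unfolding x_def using ab pos by simp
  have "arccos x < arccos 0" by (rule arccos_less_arccos) (use x0 x1 in auto)
  then have "vec_angle a b < pi / 2" unfolding vec_angle_def x_def[symmetric] arccos_0 .
  then show False using ang by simp
qed

lemma convex_distinct:
  assumes cp: "convex_polygon n v" and ab: "a < n" "b < n" "a \<noteq> b"
  shows "v a \<noteq> v b"
proof
  assume e: "v a = v b"
  obtain s where s: "s = 1 \<or> s = -1" and conv: "\<forall>i<n. \<forall>j<n. j \<noteq> i \<and> j \<noteq> nxt n i \<longrightarrow>
      s * cross2 (v (nxt n i) - v i) (v j - v i) > 0" and n3: "3 \<le> n"
    using cp unfolding convex_polygon_def by blast
  show False
  proof (cases "b = nxt n a")
    case False
    then have "s * cross2 (v (nxt n a) - v a) (v b - v a) > 0" using conv ab by auto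
    then show False using e by (simp add: cross2_eq)
  next
    case True
    obtain c where c: "c < n" "c \<noteq> a" "c \<noteq> b"
    proof (cases "0 \<noteq> a \<and> 0 \<noteq> b")
      case True then show ?thesis using that[of 0] n3 by auto
    next
      case False
      show ?thesis
      proof (cases "1 \<noteq> a \<and> 1 \<noteq> b")
        case True then show ?thesis using that[of 1] n3 by auto
      next
        case False2: False
        then have "2 \<noteq> a \<and> 2 \<noteq> b" using False ab by auto
        then show ?thesis using that[of 2] n3 by auto
      qed
    qed
    then have "s * cross2 (v (nxt n a) - v a) (v c - v a) > 0" using conv ab True by auto
    then show False using e True by (simp add: cross2_eq)
  qed
qed


lemma prv_Suc_mod: assumes "3 \<le> n" shows "prv n (Suc i mod n) = i mod n"
proof -
  have "prv n (Suc i mod n) = (Suc i mod n + (n - 1)) mod n" unfolding prv_def using assms by simp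
  also have "\<dots> = (Suc i + (n - 1)) mod n" by (simp add: mod_add_left_eq)
  also have "Suc i + (n - 1) = i + n" using assms by simp
  finally show ?thesis by simp
qed

lemma nxt_mod: "nxt n (i mod n) = Suc i mod n"
  unfolding nxt_def by (simp add: mod_Suc_eq)

lemma main_conv:
  assumes cp: "convex_polygon n v" and ang: "\<forall>t<n. interior_angle n v t \<ge> pi / 2"
  obtains U where "cpoly n U (shortest_side n v)"
    "\<And>x. x < n \<Longrightarrow> \<exists>g. linear g \<and> inj g \<and> (\<forall>y. y < n \<longrightarrow> U y = g (v y)) \<and> (\<forall>a b. cmod (g a - g b) = cmod (a - b))"
proof -
  obtain s where s: "s = 1 \<or> s = -1" and conv: "\<forall>i<n. \<forall>j<n. j \<noteq> i \<and> j \<noteq> nxt n i \<longrightarrow>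
      s * cross2 (v (nxt n i) - v i) (v j - v i) > 0" and n3: "3 \<le> n"
    using cp unfolding convex_polygon_def by blast
  define g :: "complex \<Rightarrow> complex" where "g = (if s = 1 then (\<lambda>z. z) else cnj)"
  have gsub: "g a - g b = g (a - b)" for a b unfolding g_def by simp
  have gcross: "cross2 (g a) (g b) = s * cross2 a b" for a b using s unfolding g_def by (auto simp: cross2_eq)
  have ginner: "inner (g a) (g b) = inner a b" for a b unfolding g_def by (simp add: inner_cplx)
  have gnorm: "cmod (g a) = cmod a" for a unfolding g_def by simp
  have glin: "linear g" unfolding g_def by (simp add: linear_ident linear_cnj)
  have ginj: "inj g" unfolding g_def by (simp add: inj_on_def)
  define U where "U k = g (v (k mod n))" for k
  define l where "l = shortest_side n v"
  have n0: "0 < n" using n3 by simp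
  have dist_v: "v a \<noteq> v b" if "a < n" "b < n" "a \<noteq> b" for a b using convex_distinct[OF cp that] .
  have nxt_lt: "nxt n a < n" for a unfolding nxt_def using n0 by simp
  have nxt_ne: "nxt n a \<noteq> a" if "a < n" for a
  proof
    assume "nxt n a = a"
    then have "Suc a mod n = a" unfolding nxt_def .
    moreover have "Suc a mod n = (if Suc a = n then 0 else Suc a)" using that by (simp add: mod_Suc)
    ultimately show False using that n3 by (auto split: if_splits)
  qed
  define A where "A = (\<lambda>i. dist (v i) (v (nxt n i))) ` {..<n}"
  have Af: "finite A" "A \<noteq> {}" unfolding A_def using n0 by auto
  have l_def': "l = Min A" unfolding l_def shortest_side_def A_def ..
  have lpos: "0 < l"
    unfolding l_def' using Af
  proof (subst Min_gr_iff)
    show "\<forall>a\<in>A. 0 < a"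
    proof
      fix a assume "a \<in> A"
      then obtain x where x: "x < n" "a = dist (v x) (v (nxt n x))" unfolding A_def by auto
      have "nxt n x \<noteq> x" using nxt_ne x by blast
      then have "v x \<noteq> v (nxt n x)" using dist_v[of x "nxt n x"] x nxt_lt by metis
      then show "0 < a" using x by simp
    qed
  qed auto
  have ledge: "l \<le> dist (v i) (v (nxt n i))" if "i < n" for i
    unfolding l_def' using Af that by (intro Min_le) (auto simp: A_def)
  have P: "cpoly n U l" unfolding cpoly_def
  proof (intro conjI allI impI)
    show "3 \<le> n" using n3 .
    show "0 < l" using lpos .
  next
    fix k show "U (k + n) = U k" unfolding U_def by simp
  next
    fix i j :: nat assume ij: "i < j" "j < i + n"
    have "i mod n \<noteq> j mod n"
    proof
      assume "i mod n = j mod n"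
      then have "n dvd j - i" using ij by (metis less_imp_le mod_eq_dvd_iff_nat)
      moreover have "0 < j - i" "j - i < n" using ij by auto
      ultimately show False using dvd_imp_le by fastforce
    qed
    then have "v (i mod n) \<noteq> v (j mod n)" using dist_v n0 by simp
    then show "U i \<noteq> U j" unfolding U_def using ginj by (auto dest: injD)
  next
    fix i j assume a1: "U j \<noteq> U i" and a2: "U j \<noteq> U (Suc i)"
    define i' where "i' = i mod n"
    define j' where "j' = j mod n"
    have i'n: "i' < n" "j' < n" unfolding i'_def j'_def using n0 by auto
    have nx: "nxt n i' = Suc i mod n" unfolding i'_def by (rule nxt_mod)
    have "j' \<noteq> i'" using a1 unfolding U_def i'_def j'_def by auto
    moreover have "j' \<noteq> nxt n i'" using a2 unfolding U_def j'_def nx by auto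
    ultimately have "s * cross2 (v (nxt n i') - v i') (v j' - v i') > 0" using conv i'n by blast
    moreover have "cross2 (U (Suc i) - U i) (U j - U i) = s * cross2 (v (nxt n i') - v i') (v j' - v i')"
      unfolding U_def nx i'_def j'_def by (simp add: gsub gcross nxt_mod)
    ultimately show "0 < cross2 (U (Suc i) - U i) (U j - U i)" by simp
  next
    fix i
    have "cmod (U (Suc i) - U i) = dist (v (i mod n)) (v (nxt n (i mod n)))"
      unfolding U_def nxt_mod gsub gnorm by (simp add: dist_norm norm_minus_commute)
    then show "l \<le> cmod (U (Suc i) - U i)" using ledge[of "i mod n"] n0 by simp
  next
    fix i
    define t where "t = Suc i mod n"
    have tn: "t < n" unfolding t_def using n0 by simp
    have pt: "prv n t = i mod n" unfolding t_def using prv_Suc_mod[OF n3] .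
    have nt: "nxt n t = Suc (Suc i) mod n" unfolding t_def by (rule nxt_mod)
    have ia: "pi / 2 \<le> interior_angle n v t" using ang tn by blast
    have ne1: "v (i mod n) - v t \<noteq> 0"
    proof -
      have "i mod n \<noteq> t" using nxt_ne[of "i mod n"] n0 unfolding t_def nxt_mod by simp
      then show ?thesis using dist_v[of "i mod n" t] tn n0 by simp
    qed
    have ne2: "v (Suc (Suc i) mod n) - v t \<noteq> 0"
    proof -
      have "Suc (Suc i) mod n \<noteq> t" using nxt_ne[of t] tn unfolding nt[symmetric] by simp
      then show ?thesis using dist_v[of "Suc (Suc i) mod n" t] tn n0 by simp
    qed
    have "inner (v (i mod n) - v t) (v (Suc (Suc i) mod n) - v t) \<le> 0"
      using angle_imp_inner[OF ne1 ne2] ia unfolding interior_angle_def pt nt by simp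
    then show "inner (U i - U (Suc i)) (U (Suc (Suc i)) - U (Suc i)) \<le> 0"
      unfolding U_def t_def by (simp add: gsub ginner)
  qed
  show ?thesis
  proof (rule that)
    show "cpoly n U (shortest_side n v)" using P unfolding l_def .
  next
    fix x :: nat assume "x < n"
    show "\<exists>g. linear g \<and> inj g \<and> (\<forall>y. y < n \<longrightarrow> U y = g (v y)) \<and> (\<forall>a b. cmod (g a - g b) = cmod (a - b))"
      using glin ginj gsub gnorm unfolding U_def by auto
  qed
qed

theorem mainTheorem12:
  fixes n :: nat and v :: "nat \<Rightarrow> complex" and i j k m :: nat
  assumes "convex_polygon n v"
    and "\<forall>t<n. interior_angle n v t \<ge> pi / 2"
    and "is_diagonal n i j" and "is_diagonal n k m"
    and "closed_segment (v i) (v j) \<noteq> closed_segment (v k) (v m)"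
    and "open_segment (v i) (v j) \<inter> open_segment (v k) (v m) \<noteq> {}"
  shows "dist (v i) (v j) * dist (v k) (v m) \<ge> 2 * (shortest_side n v)\<^sup>2
    \<and> (dist (v i) (v j) * dist (v k) (v m) = 2 * (shortest_side n v)\<^sup>2 \<longleftrightarrow>
         dist (v i) (v j) = sqrt 2 * shortest_side n v \<and>
         dist (v k) (v m) = sqrt 2 * shortest_side n v)"
proof -
  obtain U where P: "cpoly n U (shortest_side n v)"
    and G: "\<And>x. x < n \<Longrightarrow> \<exists>g. linear g \<and> inj g \<and> (\<forall>y. y < n \<longrightarrow> U y = g (v y)) \<and> (\<forall>a b. cmod (g a - g b) = cmod (a - b))"
    using main_conv[OF assms(1,2)] by blast
  have idx: "i < n" "j < n" "k < n" "m < n" using assms(3,4) unfolding is_diagonal_def by auto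
  obtain g where glin: "linear g" and ginj: "inj g" and gU: "\<And>y. y < n \<Longrightarrow> U y = g (v y)"
    and gn: "\<And>a b. cmod (g a - g b) = cmod (a - b)"
    using G[OF idx(1)] by blast
  have seg: "open_segment (U i) (U j) \<inter> open_segment (U k) (U m) \<noteq> {}"
  proof -
    have "open_segment (U i) (U j) = g ` open_segment (v i) (v j)"
      using open_segment_linear_image[OF glin ginj] gU idx by simp
    moreover have "open_segment (U k) (U m) = g ` open_segment (v k) (v m)"
      using open_segment_linear_image[OF glin ginj] gU idx by simp
    ultimately show ?thesis using assms(6) by (simp add: image_Int[OF ginj, symmetric])
  qed
  have cs: "closed_segment (U i) (U j) \<noteq> closed_segment (U k) (U m)"
  proof -
    have "closed_segment (U i) (U j) = g ` closed_segment (v i) (v j)"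
      using closed_segment_linear_image[OF glin] gU idx by simp
    moreover have "closed_segment (U k) (U m) = g ` closed_segment (v k) (v m)"
      using closed_segment_linear_image[OF glin] gU idx by simp
    ultimately show ?thesis using assms(5) inj_image_eq_iff[OF ginj] by simp
  qed
  have d1: "cmod (U i - U j) = dist (v i) (v j)" using gU idx gn by (simp add: dist_norm)
  have d2: "cmod (U k - U m) = dist (v k) (v m)" using gU idx gn by (simp add: dist_norm)
  show ?thesis using IM[OF P idx seg cs] unfolding d1 d2 by simp
qed


end
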